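(* Let $n\ge 2$, $N=2^n$, $s=(N-1)/2$. Consider the restricted close Hadamard problem: given oracle access (via $\hat U_z$) to a string $z\in\tilde C=\tilde A\cup\tilde B$, where $\tilde A=\tilde\Xi^{(N)}_{N/2-1}$ and $\tilde B=\bigcup_{k=0}^{N/2-2}\tilde\Xi^{(N)}_k$, decide whether $z\in\tilde A$ or $z\in\tilde B$. There is a quantum algorithm that solves this problem with certainty (for every $z\in\tilde C$) using a single query to $\hat U_z$: it prepares the state $\tfrac1{\sqrt2}(|\tfrac12\rangle_s+|-\tfrac12\rangle_s)$, applies $\hat H^{\otimes n}$, then $\hat U_z$, then $\hat H^{\otimes n}$, then a fixed unitary not depending on $z$, and then measures in the spin basis.
   Context: Work in $\mathbb{C}^N$ with computational basis $\{|y\rangle : y=0,\dots,N-1\}$; spin basis states $|m\rangle_s$, $m\in\{-s,\dots,s\}$, are identified via $|m\rangle_s=|m+s\rangle$. For $x,y\in\{0,\dots,N-1\}$, $x\cdot y\in\{0,1\}$ is the mod-2 inner product of their $n$-bit binary expansions; $\hat H^{\otimes n}|y\rangle=N^{-1/2}\sum_x(-1)^{x\cdot y}|x\rangle$. The Hadamard codeword $W^{(N)}_j\in\{0,1\}^N$ has bit $x\cdot j$ at position $x$. For $z\in\{0,1\}^N$ the oracle is the diagonal unitary $\hat U_z|x\rangle=(-1)^{z_x}|x\rangle$; a query is one application of $\hat U_z$. For $a,b\in\{0,1\}^N$, $a\preccurlyeq b$ means $a_x=1\Rightarrow b_x=1$. The set $\tilde\Xi^{(N)}_j$ consists of all strings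 $W^{(N)}_j\oplus e$ with $e\preccurlyeq W^{(N)}_{N-1}$ and Hamming weight $|e|<N/4$ ($\oplus$ is bitwise XOR). *)

theory Defs
  imports Complex_Main
begin

(* Vectors in C^N are functions nat => complex (only indices < N matter);
  N x N matrices are functions nat => nat => complex (only indices < N matter).
  Bit strings z in {0,1}^N are represented by their support, a subset of {..<N}. *)

definition dimN :: "nat \<Rightarrow> nat" where
  "dimN n = 2 ^ n"

definition bdot :: "nat \<Rightarrow> nat \<Rightarrow> nat \<Rightarrow> nat" where
  "bdot n x y = (\<Sum>i<n. if bit x i \<and> bit y i then 1 else 0) mod 2"

definition ket :: "nat \<Rightarrow> nat \<Rightarrow> complex" where
  "ket k = (\<lambda>x. if x = k then 1 else 0)"

definition spin_ket :: "nat \<Rightarrow> real \<Rightarrow> nat \<Rightarrow> complex" where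
  "spin_ket n m = ket (nat \<lfloor>m + (real (dimN n) - 1) / 2\<rfloor>)"

definition hadamard :: "nat \<Rightarrow> (nat \<Rightarrow> complex) \<Rightarrow> nat \<Rightarrow> complex" where
  "hadamard n \<psi> = (\<lambda>x. if x < dimN n then
      (1 / complex_of_real (sqrt (real (dimN n)))) *
        (\<Sum>y<dimN n. (-1) ^ bdot n x y * \<psi> y)
    else 0)"

definition query_op :: "nat set \<Rightarrow> (nat \<Rightarrow> complex) \<Rightarrow> nat \<Rightarrow> complex" where
  "query_op z \<psi> = (\<lambda>x. if x \<in> z then - \<psi> x else \<psi> x)"

definition mat_app :: "nat \<Rightarrow> (nat \<Rightarrow> nat \<Rightarrow> complex) \<Rightarrow> (nat \<Rightarrow> complex) \<Rightarrow> nat \<Rightarrow> complex" where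
  "mat_app N V \<psi> = (\<lambda>i. if i < N then (\<Sum>j<N. V i j * \<psi> j) else 0)"

definition unitary_mat :: "nat \<Rightarrow> (nat \<Rightarrow> nat \<Rightarrow> complex) \<Rightarrow> bool" where
  "unitary_mat N V \<longleftrightarrow>
     (\<forall>i<N. \<forall>j<N. (\<Sum>k<N. cnj (V k i) * V k j) = (if i = j then 1 else 0))"

definition codeword :: "nat \<Rightarrow> nat \<Rightarrow> nat set" where
  "codeword n j = {x. x < dimN n \<and> bdot n x j = 1}"

definition Xi_tilde :: "nat \<Rightarrow> nat \<Rightarrow> nat set set" where
  "Xi_tilde n j = {(codeword n j - e) \<union> (e - codeword n j) | e.
       e \<subseteq> codeword n (dimN n - 1) \<and> 4 * card e < dimN n}"

definition A_tilde :: "nat \<Rightarrow> nat set set" where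
  "A_tilde n = Xi_tilde n (dimN n div 2 - 1)"

definition B_tilde :: "nat \<Rightarrow> nat set set" where
  "B_tilde n = (\<Union>k\<in>{0..dimN n div 2 - 2}. Xi_tilde n k)"

definition init_state :: "nat \<Rightarrow> nat \<Rightarrow> complex" where
  "init_state n = (\<lambda>x. (1 / complex_of_real (sqrt 2)) *
       (spin_ket n (1/2) x + spin_ket n (-1/2) x))"

definition final_state :: "nat \<Rightarrow> (nat \<Rightarrow> nat \<Rightarrow> complex) \<Rightarrow> nat set \<Rightarrow> nat \<Rightarrow> complex" where
  "final_state n V z = mat_app (dimN n) V (hadamard n (query_op z (hadamard n (init_state n))))"

end

theory Submission
  imports Defs
begin

lemma hi_bit: "(y::nat) < 2^n \<Longrightarrow> n \<le> i \<Longrightarrow> \<not> bit y i"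
proof -
  assume "y < 2^n" "n \<le> i"
  then have "take_bit n y = y" by (simp add: take_bit_nat_eq_self_iff)
  then have "bit y i = bit (take_bit n y) i" by simp
  with \<open>n \<le> i\<close> show ?thesis by (simp add: bit_take_bit_iff)
qed

lemma eq_bits: "(x::nat) < 2^n \<Longrightarrow> y < 2^n \<Longrightarrow> (\<forall>i<n. bit x i = bit y i) \<Longrightarrow> x = y"
  by (metis bit_eqI hi_bit not_le)

lemma xor_lt: "(x::nat) < 2^n \<Longrightarrow> y < 2^n \<Longrightarrow> xor x y < 2^n"
  by (metis take_bit_nat_eq_self_iff take_bit_xor)

definition sgn1 :: "nat \<Rightarrow> nat \<Rightarrow> complex" where
  "sgn1 i y = (if bit y i then -1 else 1)"

lemma bdot_prod: "(-1::complex) ^ bdot n x y = (\<Prod>i<n. if bit x i then sgn1 i y else 1)"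
proof -
  have "(-1::complex) ^ bdot n x y = (-1) ^ (\<Sum>i<n. if bit x i \<and> bit y i then 1 else 0)"
    unfolding bdot_def by (simp add: minus_one_power_iff)
  also have "\<dots> = (\<Prod>i<n. (-1) ^ (if bit x i \<and> bit y i then 1 else 0))" by (rule power_sum)
  also have "\<dots> = (\<Prod>i<n. if bit x i then sgn1 i y else 1)"
    by (rule prod.cong) (auto simp: sgn1_def)
  finally show ?thesis .
qed

lemma sum_double: "(\<Sum>x<2*(M::nat). (g::nat\<Rightarrow>'a::comm_monoid_add) x) = (\<Sum>x<M. g (2*x) + g (2*x+1))"
  by (induction M) (auto simp: sum.distrib add_ac)

lemma sum_prod_bits: "(\<Sum>x<(2::nat)^n. \<Prod>i<n. if bit x i then (c i::complex) else 1) = (\<Prod>i<n. 1 + c i)"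
proof (induction n arbitrary: c)
  case 0 then show ?case by simp
next
  case (Suc n)
  have e: "(\<Prod>i<Suc n. if bit x i then c i else 1) = (if odd x then c 0 else 1) * (\<Prod>i<n. if bit (x div 2) i then c (Suc i) else 1)" for x :: nat
    unfolding prod.lessThan_Suc_shift by (simp add: bit_Suc bit_0)
  have "(\<Sum>x<(2::nat)^Suc n. \<Prod>i<Suc n. if bit x i then c i else 1) = 
     (\<Sum>x<(2::nat)^n. (\<Prod>i<n. if bit x i then c (Suc i) else 1) + c 0 * (\<Prod>i<n. if bit x i then c (Suc i) else 1))"
    unfolding power_Suc sum_double e by simp
  also have "\<dots> = (1 + c 0) * (\<Sum>x<(2::nat)^n. (\<Prod>i<n. if bit x i then c (Suc i) else 1))"
    by (simp add: sum.distrib sum_distrib_left algebra_simps)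
  also have "\<dots> = (1 + c 0) * (\<Prod>i<n. 1 + c (Suc i))" using Suc.IH by simp
  also have "\<dots> = (\<Prod>i<Suc n. 1 + c i)" unfolding prod.lessThan_Suc_shift by simp
  finally show ?case .
qed

lemma prod_pm: "(\<And>i. i<n \<Longrightarrow> t i = 1 \<or> t i = -1) \<Longrightarrow> (\<Prod>i<n. 1 + (t i::complex)) = (if \<forall>i<n. t i = 1 then 2^n else 0)"
proof (induction n)
  case 0 then show ?case by simp
next
  case (Suc n)
  have h: "t n = 1 \<or> t n = -1" using Suc.prems by simp
  have ih: "(\<Prod>i<n. 1 + t i) = (if \<forall>i<n. t i = 1 then 2^n else 0)" using Suc.IH Suc.prems by simp
  show ?case
  proof (cases "t n = 1")
    case True then show ?thesis using ih by (simp add: less_Suc_eq)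
  next
    case False then have "t n = -1" using h by simp
    then show ?thesis by (auto simp: less_Suc_eq)
  qed
qed

lemma bit_a: "bit ((2::nat)^(n-1) - 1) i \<longleftrightarrow> i < n - 1"
  unfolding mask_eq_exp_minus_1[symmetric] by (simp add: bit_mask_iff)
lemma bit_b: "bit ((2::nat)^(n-1)) i \<longleftrightarrow> i = n - 1"
  by (simp add: bit_exp_iff)
lemma bit_m: "bit ((2::nat)^n - 1) i \<longleftrightarrow> i < n"
  unfolding mask_eq_exp_minus_1[symmetric] by (simp add: bit_mask_iff)

lemma sg_sym: "(-1::complex) ^ bdot n x y = (-1) ^ bdot n y x"
  unfolding bdot_def by (simp add: conj_commute)

lemma bdot_lt: "bdot n x y < 2" unfolding bdot_def by simp

lemma sg_pm: "(-1::complex) ^ bdot n x y = 1 \<or> (-1::complex) ^ bdot n x y = -1"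
  using bdot_lt[of n x y] by (cases "bdot n x y") auto

lemma bdot_one: "bdot n x y = 1 \<longleftrightarrow> (-1::complex) ^ bdot n x y = -1"
  using bdot_lt[of n x y] by (cases "bdot n x y") auto

lemma sg_ab: assumes "n \<ge> 1"
  shows "(-1::complex) ^ bdot n x (2^(n-1)-1) * (-1) ^ bdot n x (2^(n-1)) = (-1) ^ bdot n x (2^n-1)"
proof -
  have "\<And>i. i < n \<Longrightarrow> (if bit x i then sgn1 i (2^(n-1)-1) else 1) * (if bit x i then sgn1 i (2^(n-1)) else 1)
        = (if bit x i then sgn1 i (2^n-1) else 1)"
    using assms by (auto simp: sgn1_def bit_a[simplified] bit_b[simplified] bit_m[simplified])
  then show ?thesis unfolding bdot_prod prod.distrib[symmetric] by (intro prod.cong) auto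
qed

lemma spin_half: assumes "n \<ge> 1" shows "spin_ket n (1/2) = ket (2^(n-1))"
proof -
  have "(1/2::real) + (real (dimN n) - 1) / 2 = real (2^(n-1))"
    using assms by (simp add: dimN_def field_simps power_eq_if[of "2::real" n])
  then show ?thesis unfolding spin_ket_def by (simp only: floor_of_nat nat_int)
qed

lemma spin_mhalf: assumes "n \<ge> 1" shows "spin_ket n (-1/2) = ket (2^(n-1) - 1)"
proof -
  have p: "(1::nat) \<le> 2^(n-1)" by simp
  have "(-1/2::real) + (real (dimN n) - 1) / 2 = real (2^(n-1) - 1)"
    using assms by (simp add: dimN_def field_simps power_eq_if[of "2::real" n] of_nat_diff[OF p])
  then show ?thesis unfolding spin_ket_def by (simp only: floor_of_nat nat_int)
qed

definition sg :: "nat \<Rightarrow> nat \<Rightarrow> nat \<Rightarrow> complex" where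
  "sg n x y = (-1) ^ bdot n x y"

definition cN :: "nat \<Rightarrow> complex" where
  "cN n = 1 / complex_of_real (sqrt (real (2^n)))"

definition c0 :: complex where
  "c0 = 1 / complex_of_real (sqrt 2)"

lemma sum_ket: "k < M \<Longrightarrow> (\<Sum>y<M. f y * ket k y) = f k"
  by (simp add: ket_def if_distrib[of "\<lambda>t. f _ * t"] cong: if_cong)

lemma H_init: assumes "n \<ge> 1"
  shows "hadamard n (init_state n) x =
    (if x < 2^n then cN n * c0 * (sg n x (2^(n-1)) + sg n x (2^(n-1) - 1)) else 0)"
proof -
  have i: "init_state n = (\<lambda>y. c0 * (ket (2^(n-1)) y + ket (2^(n-1) - 1) y))"
    unfolding init_state_def spin_half[OF assms] spin_mhalf[OF assms] c0_def by simp
  have lt1: "(2::nat)^(n-1) < 2^n" "(2::nat)^(n-1) - 1 < 2^n" using assms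
    by (simp_all add: power_strict_increasing le_less_trans[of _ "2^(n-1)"])
  have "(\<Sum>y<2^n. (-1) ^ bdot n x y * (c0 * (ket (2^(n-1)) y + ket (2^(n-1) - 1) y)))
     = c0 * ((\<Sum>y<2^n. sg n x y * ket (2^(n-1)) y) + (\<Sum>y<2^n. sg n x y * ket (2^(n-1) - 1) y))"
    unfolding sg_def by (simp add: sum_distrib_left sum.distrib algebra_simps)
  also have "\<dots> = c0 * (sg n x (2^(n-1)) + sg n x (2^(n-1) - 1))"
    using lt1 by (simp add: sum_ket)
  finally show ?thesis unfolding hadamard_def i dimN_def cN_def by simp
qed

lemma sg_pm': "sg n x y = 1 \<or> sg n x y = -1" unfolding sg_def by (rule sg_pm)

lemma Q_step: assumes "n \<ge> 1" and "z \<in> Xi_tilde n j"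
  shows "query_op z (hadamard n (init_state n)) x =
    (if x < 2^n then cN n * c0 * sg n x j * (sg n x (2^(n-1)) + sg n x (2^(n-1) - 1)) else 0)"
proof -
  obtain e where z: "z = (codeword n j - e) \<union> (e - codeword n j)"
    and e: "e \<subseteq> codeword n (dimN n - 1)"
    using assms(2) unfolding Xi_tilde_def by blast
  show ?thesis
  proof (cases "x < 2^n")
    case False then show ?thesis unfolding query_op_def H_init[OF assms(1)] by simp
  next
    case True
    let ?A = "sg n x (2^(n-1) - 1)" and ?B = "sg n x (2^(n-1))"
    have AB: "?A * ?B = sg n x (2^n - 1)" unfolding sg_def by (rule sg_ab[OF assms(1)])
    show ?thesis
    proof (cases "sg n x (2^n - 1) = -1")
      case True
      then have "?B + ?A = 0" using AB sg_pm'[of n x "2^(n-1) - 1"] sg_pm'[of n x "2^(n-1)"] by auto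
      then show ?thesis unfolding query_op_def H_init[OF assms(1)] by simp
    next
      case False
      then have "x \<notin> codeword n (dimN n - 1)"
        unfolding codeword_def dimN_def using bdot_one[of n x "2^n-1"] by (simp add: sg_def)
      then have "x \<notin> e" using e by blast
      then have xz: "x \<in> z \<longleftrightarrow> sg n x j = -1"
        unfolding z codeword_def dimN_def using True bdot_one[of n x j] by (auto simp: sg_def)
      show ?thesis
        using sg_pm'[of n x j] True unfolding query_op_def H_init[OF assms(1)] xz by auto
    qed
  qed
qed

lemma char3: assumes "y < 2^n" "j < 2^n" "c < (2::nat)^n"
  shows "(\<Sum>x<(2::nat)^n. sg n x y * sg n x j * sg n x c) = (if y = xor j c then 2^n else 0)"
proof -
  have "(\<Sum>x<(2::nat)^n. sg n x y * sg n x j * sg n x c)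
      = (\<Sum>x<(2::nat)^n. \<Prod>i<n. if bit x i then sgn1 i y * sgn1 i j * sgn1 i c else 1)"
    unfolding sg_def bdot_prod prod.distrib[symmetric] by (intro sum.cong prod.cong) (auto simp: sgn1_def)
  also have "\<dots> = (\<Prod>i<n. 1 + sgn1 i y * sgn1 i j * sgn1 i c)" by (rule sum_prod_bits)
  also have "\<dots> = (if \<forall>i<n. sgn1 i y * sgn1 i j * sgn1 i c = 1 then 2^n else 0)"
    by (rule prod_pm) (simp add: sgn1_def)
  also have "(\<forall>i<n. sgn1 i y * sgn1 i j * sgn1 i c = 1) \<longleftrightarrow> (\<forall>i<n. bit y i = bit (xor j c) i)"
  proof -
    have "(sgn1 i y * sgn1 i j * sgn1 i c = 1) \<longleftrightarrow> bit y i = bit (xor j c) i" for i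
      by (cases "bit y i"; cases "bit j i"; cases "bit c i") (simp_all add: sgn1_def bit_xor_iff)
    then show ?thesis by simp
  qed
  also have "\<dots> \<longleftrightarrow> y = xor j c"
    using eq_bits[OF assms(1) xor_lt[OF assms(2,3)]] by auto
  finally show ?thesis .
qed

lemma cN_sq: "cN n * cN n * 2^n = 1"
proof -
  have "complex_of_real (sqrt (real (2^n))) * complex_of_real (sqrt (real (2^n))) = 2^n"
    by (simp only: of_real_mult[symmetric] real_sqrt_mult_self) simp
  then show ?thesis unfolding cN_def by (simp add: field_simps)
qed


lemma sg_sym': "sg n y x = sg n x y" unfolding sg_def by (rule sg_sym)

lemma out_state: assumes "n \<ge> 1" "z \<in> Xi_tilde n j" "j < 2^n"
  shows "hadamard n (query_op z (hadamard n (init_state n))) y =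
    (if y < 2^n then c0 * (of_bool (y = xor j (2^(n-1))) + of_bool (y = xor j (2^(n-1) - 1))) else 0)"
proof (cases "y < 2^n")
  case False then show ?thesis unfolding hadamard_def dimN_def by simp
next
  case True
  have lt1: "(2::nat)^(n-1) < 2^n" "(2::nat)^(n-1) - 1 < 2^n" using assms
    by (simp_all add: power_strict_increasing le_less_trans[of _ "2^(n-1)"])
  have "(\<Sum>x<2^n. (-1) ^ bdot n y x * query_op z (hadamard n (init_state n)) x)
      = (\<Sum>x<2^n. cN n * c0 * (sg n x y * sg n x j * sg n x (2^(n-1)) + sg n x y * sg n x j * sg n x (2^(n-1) - 1)))"
    unfolding Q_step[OF assms(1,2)] sg_def[symmetric] sg_sym'[of n y]
    by (intro sum.cong refl) (simp add: algebra_simps)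
  also have "\<dots> = cN n * c0 * ((\<Sum>x<2^n. sg n x y * sg n x j * sg n x (2^(n-1))) + (\<Sum>x<2^n. sg n x y * sg n x j * sg n x (2^(n-1) - 1)))"
    by (simp only: sum.distrib[symmetric] sum_distrib_left)
  also have "\<dots> = cN n * c0 * 2^n * (of_bool (y = xor j (2^(n-1))) + of_bool (y = xor j (2^(n-1) - 1)))"
    unfolding char3[OF True assms(3) lt1(1)] char3[OF True assms(3) lt1(2)] by simp
  finally have S: "(\<Sum>x<2^n. (-1) ^ bdot n y x * query_op z (hadamard n (init_state n)) x) = \<dots>" .
  have "hadamard n (query_op z (hadamard n (init_state n))) y = cN n * (cN n * c0 * 2^n * (of_bool (y = xor j (2^(n-1))) + of_bool (y = xor j (2^(n-1) - 1))))"
    unfolding hadamard_def[of n "query_op z (hadamard n (init_state n))"] dimN_def cN_def[symmetric] S using True by simp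
  also have "\<dots> = (cN n * cN n * 2^n) * c0 * (of_bool (y = xor j (2^(n-1))) + of_bool (y = xor j (2^(n-1) - 1)))"
    by (simp only: ac_simps)
  finally show ?thesis using True cN_sq[of n] by simp
qed

definition Vid :: "nat \<Rightarrow> nat \<Rightarrow> complex" where "Vid i k = of_bool (i = k)"

lemma Vid_unitary: "unitary_mat N Vid"
proof -
  have e: "cnj (Vid k i) * Vid k j = (if k = i then (if i = j then 1 else 0) else 0)" for k i j
    unfolding Vid_def by auto
  show ?thesis unfolding unitary_mat_def e by simp
qed

lemma mat_id: "mat_app N Vid \<psi> m = (if m < N then \<psi> m else 0)"
proof -
  have "m < N \<Longrightarrow> (\<Sum>k<N. Vid m k * \<psi> k) = \<psi> m"
    unfolding Vid_def by (simp add: of_bool_def if_distrib[of "\<lambda>t. t * _"] cong: if_cong)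
  then show ?thesis unfolding mat_app_def by simp
qed

lemma final_eq: assumes "n \<ge> 1" "z \<in> Xi_tilde n j" "j < 2^n"
  shows "final_state n Vid z m =
    (if m < 2^n then c0 * (of_bool (m = xor j (2^(n-1))) + of_bool (m = xor j (2^(n-1) - 1))) else 0)"
  unfolding final_state_def mat_id out_state[OF assms] dimN_def by simp

lemma cmod_c0: "(cmod c0)^2 = 1/2"
  unfolding c0_def by (simp add: norm_divide power_divide)

lemma sum_two: assumes "finite S" "y1 \<in> S" "y2 \<in> S" "y1 \<noteq> y2" "S \<subseteq> {..<N}"
  shows "(\<Sum>m\<in>S. (cmod (if m < N then c0 * (of_bool (m = y1) + of_bool (m = y2)) else 0))^2) = 1"
proof -
  have "(\<Sum>m\<in>S. (cmod (if m < N then c0 * (of_bool (m = y1) + of_bool (m = y2)) else 0))^2)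
     = (\<Sum>m\<in>{y1,y2}. (cmod (if m < N then c0 * (of_bool (m = y1) + of_bool (m = y2)) else 0))^2)"
    using assms by (intro sum.mono_neutral_right) auto
  also have "\<dots> = 1" using assms cmod_c0 by auto
  finally show ?thesis .
qed

lemma bit_a': "bit ((2::nat)^(n - Suc 0) - Suc 0) i \<longleftrightarrow> i < n - Suc 0"
  using bit_a[of n i] by simp
lemma bit_b': "bit ((2::nat)^(n - Suc 0)) i \<longleftrightarrow> i = n - Suc 0"
  using bit_b[of n i] by simp
lemma bit_m': "bit ((2::nat)^n - Suc 0) i \<longleftrightarrow> i < n"
  using bit_m[of n i] by simp

lemma lts: assumes "n \<ge> 1" shows "(2::nat)^(n-1) < 2^n" "(2::nat)^(n-1) - 1 < 2^n" "(2::nat)^n - 1 < 2^n"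
  using assms by (simp_all add: power_strict_increasing le_less_trans[of _ "2^(n-1)"])

lemma xor_ab: assumes "n \<ge> 1" shows "xor ((2::nat)^(n-1)-1) (2^(n-1)) = 2^n - 1"
  using assms by (intro eq_bits[of _ n] xor_lt lts) (auto simp: bit_xor_iff bit_a' bit_b' bit_m')

lemma caseB: assumes "n \<ge> 2" "j \<le> (2::nat)^(n-1) - 2"
  shows "xor j (2^(n-1)) \<noteq> xor j (2^(n-1) - 1)"
    "xor j (2^(n-1)) \<noteq> 0" "xor j (2^(n-1)) \<noteq> 2^n - 1"
    "xor j (2^(n-1) - 1) \<noteq> 0" "xor j (2^(n-1) - 1) \<noteq> 2^n - 1"
proof -
  have n1: "n \<ge> 1" using assms by simp
  have p: "(2::nat)^(n-1) \<ge> 2" using assms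
    using power_increasing[of 1 "n-1" "2::nat"] by simp
  have jb: "j < 2^(n-1)" using assms p by linarith
  have ja: "j \<noteq> 2^(n-1) - 1" using assms p by linarith
  have jbit: "\<not> bit j (n-1)" using hi_bit[OF jb] by simp
  have jlt: "j < 2^n" using jb lts(1)[OF n1] by linarith
  show "xor j (2^(n-1)) \<noteq> xor j (2^(n-1) - 1)"
  proof
    assume "xor j (2^(n-1)) = xor j (2^(n-1) - 1)"
    then have "bit (xor j (2^(n-1))) (n-1) = bit (xor j (2^(n-1) - 1)) (n-1)" by simp
    then show False by (simp add: bit_xor_iff bit_a' bit_b')
  qed
  show "xor j (2^(n-1)) \<noteq> 0"
  proof
    assume "xor j (2^(n-1)) = 0"
    then have "bit (xor j (2^(n-1))) (n-1) = bit (0::nat) (n-1)" by simp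
    then show False using jbit by (simp add: bit_xor_iff bit_b')
  qed
  show "xor j (2^(n-1) - 1) \<noteq> 2^n - 1"
  proof
    assume "xor j (2^(n-1) - 1) = 2^n - 1"
    then have "bit (xor j (2^(n-1) - 1)) (n-1) = bit ((2::nat)^n - 1) (n-1)" by simp
    then show False using jbit n1 by (simp add: bit_xor_iff bit_a' bit_m')
  qed
  show "xor j (2^(n-1) - 1) \<noteq> 0"
  proof
    assume h: "xor j (2^(n-1) - 1) = 0"
    have "\<forall>i<n. bit j i = bit ((2::nat)^(n-1) - 1) i"
    proof (intro allI impI)
      fix i assume "i < n"
      have "bit (xor j (2^(n-1) - 1)) i = bit (0::nat) i" using h by simp
      then show "bit j i = bit ((2::nat)^(n-1) - 1) i" by (simp add: bit_xor_iff)
    qed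
    then have "j = 2^(n-1) - 1" using eq_bits[OF jlt lts(2)[OF n1]] by blast
    then show False using ja by simp
  qed
  show "xor j (2^(n-1)) \<noteq> 2^n - 1"
  proof
    assume h: "xor j (2^(n-1)) = 2^n - 1"
    have "\<forall>i<n. bit j i = bit ((2::nat)^(n-1) - 1) i"
    proof (intro allI impI)
      fix i assume i: "i < n"
      have "bit (xor j (2^(n-1))) i = bit ((2::nat)^n - 1) i" using h by simp
      then show "bit j i = bit ((2::nat)^(n-1) - 1) i" using i jbit
        by (cases "i = n - 1") (auto simp: bit_xor_iff bit_a' bit_b' bit_m')
    qed
    then have "j = 2^(n-1) - 1" using eq_bits[OF jlt lts(2)[OF n1]] by blast
    then show False using ja by simp
  qed
qed

theorem claim1:
  fixes n :: nat
  assumes "n \<ge> 2"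
  shows "\<exists>V :: nat \<Rightarrow> nat \<Rightarrow> complex. unitary_mat (dimN n) V \<and>
           (\<exists>acceptA :: nat \<Rightarrow> bool.
              \<forall>z \<in> A_tilde n \<union> B_tilde n.
                (\<Sum>m\<in>{m. m < dimN n \<and> (acceptA m \<longleftrightarrow> z \<in> A_tilde n)}.
                    (cmod (final_state n V z m))\<^sup>2) = 1)"
proof -
  have n1: "n \<ge> 1" using assms by simp
  define acc where "acc m = (m = 0 \<or> m = (2::nat)^n - 1)" for m
  have dd: "dimN n div 2 = 2^(n-1)" using n1 unfolding dimN_def by (cases n) auto
  have N2: "(2::nat)^n \<ge> 2" using power_increasing[of 1 n "2::nat"] n1 by simp
  have "\<forall>z \<in> A_tilde n \<union> B_tilde n.
           (\<Sum>m\<in>{m. m < dimN n \<and> (acc m \<longleftrightarrow> z \<in> A_tilde n)}. (cmod (final_state n Vid z m))\<^sup>2) = 1"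
  proof
    fix z assume zAB: "z \<in> A_tilde n \<union> B_tilde n"
    show "(\<Sum>m\<in>{m. m < dimN n \<and> (acc m \<longleftrightarrow> z \<in> A_tilde n)}. (cmod (final_state n Vid z m))\<^sup>2) = 1"
    proof (cases "z \<in> A_tilde n")
      case True
      then have zX: "z \<in> Xi_tilde n (2^(n-1) - 1)" unfolding A_tilde_def dd .
      have fe: "final_state n Vid z m = (if m < 2^n then c0 * (of_bool (m = 2^n - 1) + of_bool (m = 0)) else 0)" for m
        unfolding final_eq[OF n1 zX lts(2)[OF n1]] xor_ab[OF n1] by simp
      have S: "{m. m < dimN n \<and> (acc m \<longleftrightarrow> z \<in> A_tilde n)} = {m. m < 2^n \<and> (m = 0 \<or> m = 2^n - 1)}"
        using True unfolding acc_def dimN_def by simp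
      show ?thesis unfolding S fe
        by (rule sum_two) (use N2 in auto)
    next
      case False
      then have "z \<in> B_tilde n" using zAB by simp
      then obtain k where k: "k \<le> 2^(n-1) - 2" and zX: "z \<in> Xi_tilde n k"
        unfolding B_tilde_def dd by auto
      have klt: "k < 2^n" using k lts(1)[OF n1] by linarith
      have fe: "final_state n Vid z m = (if m < 2^n then c0 * (of_bool (m = xor k (2^(n-1))) + of_bool (m = xor k (2^(n-1) - 1))) else 0)" for m
        by (rule final_eq[OF n1 zX klt])
      have S: "{m. m < dimN n \<and> (acc m \<longleftrightarrow> z \<in> A_tilde n)} = {m. m < 2^n \<and> \<not> (m = 0 \<or> m = 2^n - 1)}"
        using False unfolding acc_def dimN_def by simp
      show ?thesis unfolding S fe
        by (rule sum_two) (use caseB[OF assms k] xor_lt[OF klt lts(1)[OF n1]] xor_lt[OF klt lts(2)[OF n1]] in auto)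
    qed
  qed
  then show ?thesis using Vid_unitary by blast
qed

end
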